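(* Let $s,y\in\mathbb{R}^n$ with $s^Ty>0$, let $\alpha^{BB1}=\dfrac{s^Ts}{s^Ty}$ and $\alpha^{BB2}=\dfrac{s^Ty}{y^Ty}$, and for $\gamma\in[0,1]$ let $\alpha=\gamma\alpha^{BB1}+(1-\gamma)\alpha^{BB2}$. Then there exists $\tau\in[0,1]$ such that $D=\alpha I$ is a solution of $$\min_{D=\beta I,\ \beta>0}\ \big\|\tau(D^{-1}s-y)+(1-\tau)(s-Dy)\big\| ,$$ where $I$ is the $n\times n$ identity matrix.
   Context: $\|\cdot\|$ is the Euclidean norm. In the paper, $s=s_{k-1}=x_k-x_{k-1}$ and $y=y_{k-1}=g_k-g_{k-1}$ are differences of consecutive iterates and gradients, and $\alpha^{BB1},\alpha^{BB2}$ are the long and short Barzilai–Borwein stepsizes. *)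

theory Defs
  imports "HOL-Analysis.Analysis"
begin

definition alpha_BB1 :: "real^'n \<Rightarrow> real^'n \<Rightarrow> real" where
  "alpha_BB1 s y = (s \<bullet> s) / (s \<bullet> y)"

definition alpha_BB2 :: "real^'n \<Rightarrow> real^'n \<Rightarrow> real" where
  "alpha_BB2 s y = (s \<bullet> y) / (y \<bullet> y)"

definition bb_obj :: "real \<Rightarrow> real^'n^'n \<Rightarrow> real^'n \<Rightarrow> real^'n \<Rightarrow> real" where
  "bb_obj \<tau> D s y = norm (\<tau> *\<^sub>R (matrix_inv D *v s - y) + (1 - \<tau>) *\<^sub>R (s - D *v y))"

end

theory Submission imports Defs begin
lemma mv_scal0: fixes v :: "real^'n" and A :: "real^'n^'n" shows "(b *\<^sub>R A) *v v = b *\<^sub>R (A *v v)"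
  by (simp add: matrix_vector_mult_def vec_eq_iff sum_distrib_left mult.assoc)
lemma mv_scal: fixes v :: "real^'n" shows "(b *\<^sub>R mat 1) *v v = b *\<^sub>R v"
  by (simp add: mv_scal0)
lemma inv_scal: fixes v :: "real^'n" assumes "b \<noteq> 0"
  shows "matrix_inv (b *\<^sub>R mat 1 :: real^'n^'n) *v v = (1/b) *\<^sub>R v"
proof -
  let ?A = "b *\<^sub>R mat 1 :: real^'n^'n"
  have ex: "\<exists>A'. ?A ** A' = mat 1 \<and> A' ** ?A = mat 1"
    apply (rule exI[of _ "(1/b) *\<^sub>R mat 1"])
    using assms by (simp add: matrix_scalar_ac flip: scalar_matrix_assoc)
  then have "matrix_inv ?A ** ?A = mat 1" unfolding matrix_inv_def by (rule someI2_ex) auto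
  then have "(matrix_inv ?A ** ?A) *v ((1/b) *\<^sub>R v) = (1/b) *\<^sub>R v" by simp
  then show ?thesis using assms by (simp add: matrix_vector_mul_assoc[symmetric] mv_scal matrix_vector_mult_scaleR)
qed
lemma Fmono:
  fixes a b c t x z :: real
  assumes "c > 0" "b > 0" "b/c \<le> x" "x \<le> z" "0 \<le> t" "t \<le> 1"
  shows "(1-t)*x^2*(c*x-b) - t*(a-b*x) \<le> (1-t)*z^2*(c*z-b) - t*(a-b*z)"
proof -
  have bx: "b \<le> c*x" using assms by (simp add: divide_le_eq mult.commute)
  have x0: "0 \<le> x" using assms by (meson divide_nonneg_pos less_imp_le order_trans)
  have "x^2 \<le> z^2" using x0 assms by (simp add: power_mono)
  moreover have "c*x-b \<le> c*z-b" using assms by simp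
  ultimately have "x^2*(c*x-b) \<le> z^2*(c*z-b)" using bx by (intro mult_mono) auto
  then have "(1-t)*(x^2*(c*x-b)) \<le> (1-t)*(z^2*(c*z-b))" using assms by (intro mult_left_mono) auto
  moreover have "t*(b*x) \<le> t*(b*z)" using assms by (intro mult_left_mono) auto
  ultimately show ?thesis by (simp add: algebra_simps)
qed

lemma Gderiv:
  fixes a b c t x :: real
  assumes "x > 0"
  shows "((\<lambda>x. (t/x + 1 - t)^2 * (a - 2*b*x + c*x^2)) has_real_derivative
     2*(t/x + 1 - t)*((1-t)*x^2*(c*x-b) - t*(a-b*x))/x^2) (at x)"
proof -
  have "((\<lambda>x. (t/x + 1 - t)^2 * (a - 2*b*x + c*x^2)) has_real_derivative
     (2*(t/x+1-t)*(-(t/x^2))) * (a - 2*b*x + c*x^2) + (t/x+1-t)^2*(2*c*x - 2*b)) (at x)"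
    using assms apply (intro derivative_eq_intros refl) apply auto
    apply (simp add: power2_eq_square field_simps) done
  moreover have "(2*(t/x+1-t)*(-(t/x^2))) * (a - 2*b*x + c*x^2) + (t/x+1-t)^2*(2*c*x - 2*b)
     = 2*(t/x + 1 - t)*((1-t)*x^2*(c*x-b) - t*(a-b*x))/x^2"
    using assms by (simp add: field_simps power2_eq_square)
  ultimately show ?thesis by simp
qed

lemma key:
  fixes a b c t al be :: real
  assumes "c > 0" "b > 0" "b^2 \<le> a*c" "b/c \<le> al" "0 \<le> t" "t \<le> 1"
    and F0: "(1-t)*al^2*(c*al-b) - t*(a-b*al) = 0" and "be > 0"
  shows "(t/al + 1 - t)^2 * (a - 2*b*al + c*al^2) \<le> (t/be + 1 - t)^2 * (a - 2*b*be + c*be^2)"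
proof -
  define F where "F x = (1-t)*x^2*(c*x-b) - t*(a-b*x)" for x
  define G where "G x = (t/x + 1 - t)^2 * (a - 2*b*x + c*x^2)" for x
  have al0: "al > 0" using assms by (smt (verit) divide_pos_pos)
  have w0: "t/x + 1 - t \<ge> 0" if "x > 0" for x using that assms divide_nonneg_pos[of t x] by linarith
  have D: "DERIV G x :> 2*(t/x + 1 - t)*F x/x^2" if "x > 0" for x
    unfolding G_def F_def using Gderiv[OF that] .
  have Fle: "F x \<le> 0" if "0 < x" "x \<le> al" for x
  proof (cases "x \<le> b/c")
    case True
    then have "c*x - b \<le> 0" using assms by (simp add: le_divide_eq mult.commute)
    moreover have "a - b*x \<ge> 0"
    proof -
      have "b*x \<le> b*(b/c)" using True assms by (intro mult_left_mono) auto
      also have "\<dots> \<le> a" using assms by (simp add: divide_le_eq power2_eq_square mult.commute)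
      finally show ?thesis by simp
    qed
    ultimately show ?thesis unfolding F_def using assms
      by (smt (verit) mult_nonneg_nonneg mult_nonneg_nonpos zero_le_power2)
  next
    case False
    then show ?thesis using Fmono[of c b x al t a] assms that F0 unfolding F_def by simp
  qed
  have Fge: "F x \<ge> 0" if "al \<le> x" for x
    using Fmono[of c b al x t a] assms that F0 unfolding F_def by simp
  show ?thesis
  proof (cases "be \<le> al")
    case True
    have "G al \<le> G be"
      apply (rule DERIV_nonpos_imp_nonincreasing[OF True])
      subgoal for x
        apply (rule exI[of _ "2*(t/x + 1 - t)*F x/x^2"])
        using D[of x] Fle[of x] w0[of x] assms
        by (auto intro!: divide_nonpos_pos mult_nonneg_nonpos)
      done
    then show ?thesis unfolding G_def .
  next
    case False
    have "G al \<le> G be"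
      apply (rule DERIV_nonneg_imp_nondecreasing[of al be G]) using False apply simp
      subgoal for x
        apply (rule exI[of _ "2*(t/x + 1 - t)*F x/x^2"])
        using D[of x] Fge[of x] w0[of x] al0
        by auto
      done
    then show ?thesis unfolding G_def .
  qed
qed
lemma obj_eq:
  fixes s y :: "real^'n"
  assumes "be > 0"
  shows "bb_obj t (be *\<^sub>R mat 1) s y =
    sqrt ((t/be + 1 - t)^2 * (s \<bullet> s - 2*(s \<bullet> y)*be + (y \<bullet> y)*be^2))"
proof -
  have v: "t *\<^sub>R (matrix_inv (be *\<^sub>R mat 1) *v s - y) + (1 - t) *\<^sub>R (s - (be *\<^sub>R mat 1) *v y)
      = (t/be + 1 - t) *\<^sub>R (s - be *\<^sub>R y)"
    using assms by (simp add: inv_scal mv_scal vec_eq_iff field_simps)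
  have i: "(s - be *\<^sub>R y) \<bullet> (s - be *\<^sub>R y) = s \<bullet> s - 2*(s \<bullet> y)*be + (y \<bullet> y)*be^2"
    by (simp add: inner_diff_left inner_diff_right inner_commute power2_eq_square algebra_simps)
  show ?thesis unfolding bb_obj_def v norm_eq_sqrt_inner
    by (simp add: i power2_eq_square mult.assoc)
qed

theorem theorem1:
  fixes s y :: "real^'n" and \<gamma> :: real
  assumes "s \<bullet> y > 0"
    and "0 \<le> \<gamma>" and "\<gamma> \<le> 1"
  shows "\<exists>\<tau>. 0 \<le> \<tau> \<and> \<tau> \<le> 1 \<and>
    (let \<alpha> = \<gamma> * alpha_BB1 s y + (1 - \<gamma>) * alpha_BB2 s y in
      \<alpha> > 0 \<and>
      (\<forall>\<beta>::real. \<beta> > 0 \<longrightarrow>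
         bb_obj \<tau> (\<alpha> *\<^sub>R mat 1) s y \<le> bb_obj \<tau> (\<beta> *\<^sub>R mat 1) s y))"
proof -
  define a where "a = s \<bullet> s"
  define b where "b = s \<bullet> y"
  define c where "c = y \<bullet> y"
  define al where "al = \<gamma> * alpha_BB1 s y + (1 - \<gamma>) * alpha_BB2 s y"
  have b0: "b > 0" using assms b_def by simp
  have "y \<noteq> 0" using assms by auto
  then have c0: "c > 0" unfolding c_def by simp
  have "s \<noteq> 0" using assms by auto
  then have a0: "a > 0" unfolding a_def by simp
  have cs: "b^2 \<le> a*c" unfolding a_def b_def c_def by (rule Cauchy_Schwarz_ineq)
  have r: "b/c \<le> a/b" using cs b0 c0 by (simp add: divide_le_eq le_divide_eq power2_eq_square mult.commute)
  have al: "al = \<gamma>*(a/b) + (1-\<gamma>)*(b/c)"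
    unfolding al_def alpha_BB1_def alpha_BB2_def a_def b_def c_def by simp
  have m1: "\<gamma>*(b/c) \<le> \<gamma>*(a/b)" using r assms by (intro mult_left_mono) auto
  have m2: "(1-\<gamma>)*(b/c) \<le> (1-\<gamma>)*(a/b)" using r assms by (intro mult_left_mono) auto
  have al_lo: "b/c \<le> al" unfolding al using m1 left_diff_distrib[of 1 \<gamma> "b/c"] by simp
  have al_hi: "al \<le> a/b" unfolding al using m2 left_diff_distrib[of 1 \<gamma> "a/b"] by simp
  have al0: "al > 0" using al_lo b0 c0 by (smt (verit) divide_pos_pos)
  define P where "P = al^2*(c*al-b)"
  define Q where "Q = a - b*al"
  have P0: "P \<ge> 0" unfolding P_def using al_lo c0 by (simp add: divide_le_eq mult.commute)
  have Q0: "Q \<ge> 0" unfolding Q_def using al_hi b0 by (simp add: le_divide_eq mult.commute)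
  define t where "t = P/(P+Q)"
  have t0: "0 \<le> t" unfolding t_def using P0 Q0 by simp
  have t1: "t \<le> 1" unfolding t_def using P0 Q0 by (simp add: divide_le_eq)
  have F0: "(1-t)*al^2*(c*al-b) - t*(a-b*al) = 0"
  proof (cases "P+Q = 0")
    case True then have "P = 0" "Q = 0" using P0 Q0 by auto
    then show ?thesis unfolding P_def Q_def by (simp add: mult.assoc)
  next
    case False then show ?thesis unfolding t_def P_def[symmetric] Q_def[symmetric]
      by (simp add: field_simps mult.assoc P_def)
  qed
  have "bb_obj t (al *\<^sub>R mat 1) s y \<le> bb_obj t (be *\<^sub>R mat 1) s y" if "be > 0" for be
    unfolding obj_eq[OF al0] obj_eq[OF that] a_def[symmetric] b_def[symmetric] c_def[symmetric]
    using key[OF c0 b0 cs al_lo t0 t1 F0 that] by (simp add: mult.assoc)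
  then show ?thesis using t0 t1 al0 unfolding al_def Let_def by blast
qed

end
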